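(* Let $S$ be a $\mathcal C$-semigroup in $\mathbb N^d$ and $\mathbf f\in\mathbb N^d$ such that $\mathrm{PF}(S)=\{\mathbf f\}$ or $\mathrm{PF}(S)=\{\mathbf f,\mathbf f/2\}$. Then $S$ is $\mathcal C$-irreducible.
   Context: For a finitely generated submonoid $T$ of $\mathbb N^d$, $\mathrm{pos}(T)$ is the rational cone of nonnegative rational combinations of its generators, $\mathcal H(T)=(\mathrm{pos}(T)\setminus T)\cap\mathbb N^d$, and $\mathrm{PF}(T)=\{\mathbf a\in\mathcal H(T):\mathbf a+(T\setminus\{0\})\subseteq T\}$. $T$ is a $\mathcal C$-semigroup if $\mathcal H(T)$ is finite. A $\mathcal C$-semigroup $S$ is $\mathcal C$-irreducible if it cannot be expressed as the intersection of two finitely generated submonoids $S_1,S_2$ of $\mathbb N^d$ with $\mathrm{pos}(S_1)=\mathrm{pos}(S_2)=\mathrm{pos}(S)$, each containing $S$ properly. *)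

theory Defs
  imports Main "HOL.Rat"
begin

text \<open>Elements of N^d are represented as functions nat => nat vanishing outside {0..<d}.\<close>

definition vecs :: "nat \<Rightarrow> (nat \<Rightarrow> nat) set" where
  "vecs d = {v. \<forall>i\<ge>d. v i = 0}"

definition zerov :: "nat \<Rightarrow> nat" where
  "zerov = (\<lambda>_. 0)"

definition addv :: "(nat \<Rightarrow> nat) \<Rightarrow> (nat \<Rightarrow> nat) \<Rightarrow> (nat \<Rightarrow> nat)" where
  "addv a b = (\<lambda>i. a i + b i)"

definition fg_monoid :: "nat \<Rightarrow> (nat \<Rightarrow> nat) set \<Rightarrow> bool" where
  "fg_monoid d T \<longleftrightarrow> (\<exists>G. finite G \<and> G \<subseteq> vecs d \<and>
      T = {(\<lambda>i. \<Sum>g\<in>G. n g * g i) | n. True})"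

text \<open>For finitely generated T this
  coincides with the cone spanned by its generators.\<close>
definition pos :: "(nat \<Rightarrow> nat) set \<Rightarrow> (nat \<Rightarrow> rat) set" where
  "pos T = {x. \<exists>F c. finite F \<and> F \<subseteq> T \<and> (\<forall>g\<in>F. c g \<ge> (0::rat)) \<and>
      x = (\<lambda>i. \<Sum>g\<in>F. c g * of_nat (g i))}"

definition holes :: "nat \<Rightarrow> (nat \<Rightarrow> nat) set \<Rightarrow> (nat \<Rightarrow> nat) set" where
  "holes d T = {x \<in> vecs d. (\<lambda>i. of_nat (x i) :: rat) \<in> pos T \<and> x \<notin> T}"

definition PF :: "nat \<Rightarrow> (nat \<Rightarrow> nat) set \<Rightarrow> (nat \<Rightarrow> nat) set" where
  "PF d T = {a \<in> holes d T. \<forall>t \<in> T - {zerov}. addv a t \<in> T}"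

definition C_semigroup :: "nat \<Rightarrow> (nat \<Rightarrow> nat) set \<Rightarrow> bool" where
  "C_semigroup d S \<longleftrightarrow> fg_monoid d S \<and> finite (holes d S)"

definition C_irreducible :: "nat \<Rightarrow> (nat \<Rightarrow> nat) set \<Rightarrow> bool" where
  "C_irreducible d S \<longleftrightarrow> C_semigroup d S \<and>
     \<not> (\<exists>S1 S2. fg_monoid d S1 \<and> fg_monoid d S2 \<and> pos S1 = pos S \<and> pos S2 = pos S \<and>
          S \<subset> S1 \<and> S \<subset> S2 \<and> S = S1 \<inter> S2)"

end

theory Submission
  imports Defs
begin

lemma fg_vecs: "fg_monoid d T \<Longrightarrow> x \<in> T \<Longrightarrow> x \<in> vecs d"
  unfolding fg_monoid_def vecs_def by (auto simp: subset_iff vecs_def)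

lemma fg_add: assumes "fg_monoid d T" "x \<in> T" "y \<in> T" shows "addv x y \<in> T"
proof -
  obtain G where G: "finite G" "G \<subseteq> vecs d" "T = {(\<lambda>i. \<Sum>g\<in>G. n g * g i) | n. True}"
    using assms(1) unfolding fg_monoid_def by blast
  obtain n where n: "x = (\<lambda>i. \<Sum>g\<in>G. n g * g i)" using assms(2) G(3) by blast
  obtain m where m: "y = (\<lambda>i. \<Sum>g\<in>G. m g * g i)" using assms(3) G(3) by blast
  have "addv x y = (\<lambda>i. \<Sum>g\<in>G. (\<lambda>g. n g + m g) g * g i)"
    unfolding addv_def n m by (auto simp: sum.distrib algebra_simps)
  then show ?thesis using G(3) by auto
qed

lemma in_pos: "x \<in> T \<Longrightarrow> (\<lambda>i. of_nat (x i) :: rat) \<in> pos T"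
  unfolding pos_def
  by (rule CollectI, rule exI[of _ "{x}"], rule exI[of _ "\<lambda>_. 1"]) auto

lemma key:
  assumes "C_semigroup d S" "fg_monoid d T" "pos T = pos S" "S \<subset> T"
  shows "\<exists>x\<in>T. x \<in> PF d S"
proof -
  define A where "A = T - S"
  have AH: "A \<subseteq> holes d S"
    using assms fg_vecs in_pos unfolding A_def holes_def by fastforce
  have fin: "finite A" using AH assms(1) unfolding C_semigroup_def by (meson finite_subset)
  have ne: "A \<noteq> {}" using assms(4) unfolding A_def by blast
  define \<sigma> where "\<sigma> = (\<lambda>x::nat\<Rightarrow>nat. \<Sum>i<d. x i)"
  define M where "M = Max (\<sigma> ` A)"
  have "M \<in> \<sigma> ` A" unfolding M_def using fin ne by simp
  then obtain x where x: "x \<in> A" "\<sigma> x = M" by blast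
  have xmax: "\<sigma> y \<le> \<sigma> x" if "y \<in> A" for y
    using that fin x(2) unfolding M_def by simp
  have "x \<in> PF d S"
    unfolding PF_def
  proof (intro CollectI conjI ballI)
    show "x \<in> holes d S" using x AH by blast
    fix t assume t: "t \<in> S - {zerov}"
    have tv: "t \<in> vecs d" using t assms(1) fg_vecs unfolding C_semigroup_def by blast
    have "\<exists>i<d. t i > 0"
    proof (rule ccontr)
      assume "\<not> ?thesis"
      then have "t = zerov" using tv unfolding vecs_def zerov_def
        by (auto simp: fun_eq_iff) (metis not_gr0 not_le)
      then show False using t by blast
    qed
    then obtain i where i: "i < d" "t i > 0" by blast
    have "\<sigma> (addv x t) = \<sigma> x + \<sigma> t" unfolding \<sigma>_def addv_def by (simp add: sum.distrib)
    moreover have "\<sigma> t > 0"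
    proof -
      have "t i \<le> (\<Sum>j<d. t j)" using i(1) by (intro member_le_sum) auto
      then show ?thesis using i(2) by (simp add: \<sigma>_def)
    qed
    ultimately have "\<sigma> (addv x t) > \<sigma> x" by simp
    then have "addv x t \<notin> A" using xmax by fastforce
    moreover have "addv x t \<in> T"
      using fg_add[OF assms(2)] x(1) t assms(4) unfolding A_def by blast
    ultimately show "addv x t \<in> S" unfolding A_def by blast
  qed
  then show ?thesis using x(1) unfolding A_def by blast
qed

theorem proposition4p6:
  fixes d :: nat and S :: "(nat \<Rightarrow> nat) set" and f :: "nat \<Rightarrow> nat"
  assumes "C_semigroup d S"
    and "f \<in> vecs d"
    and "PF d S = {f} \<or> (\<exists>h. h \<in> vecs d \<and> (\<forall>i. 2 * h i = f i) \<and> PF d S = {f, h})"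
  shows "C_irreducible d S"
proof -
  have fS: "f \<notin> S" using assms(3) unfolding PF_def holes_def by blast
  have cont: "f \<in> T" if T: "fg_monoid d T" "pos T = pos S" "S \<subset> T" for T
  proof -
    obtain x where x: "x \<in> T" "x \<in> PF d S" using key[OF assms(1) T] by blast
    show ?thesis
    proof (cases "x = f")
      case True then show ?thesis using x by simp
    next
      case False
      then obtain h where h: "\<forall>i. 2 * h i = f i" "x = h" using assms(3) x(2) by blast
      have "addv h h = f" using h(1) unfolding addv_def by (auto simp: fun_eq_iff) (metis mult_2)
      then show ?thesis using fg_add[OF T(1) x(1) x(1)] h(2) by simp
    qed
  qed
  show ?thesis unfolding C_irreducible_def using assms(1) cont fS by blast
qed

end
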